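(* In the two-period, four-sequence crossover design ($\mathcal{S}^{\mathrm{obs}}=\{AA,AB,BA,BB\}$, all $N_{\vec z}\ge1$) under complete randomization, suppose Assumption 1 holds and Assumptions 2 and 3 hold with $k=1$, so that $\tau_1=\tau_2(A)=\tau_2(B)=:\tau$. Then the BLUE of $\tau$ is $\widehat\tau=\sum_{t=1}^2\sum_{\vec z\in\mathcal{S}^{\mathrm{obs}}}\tilde w^*_t(\vec z)\widehat Y_t(\vec z)$, where the weights $\tilde w^*$ minimize $$f(\tilde w)=\sum_{z_1\in\{A,B\}}\Big\{\tfrac{\tilde w_1(z_1A)^2}{N_{z_1A}}+\tfrac{\tilde w_1(z_1B)^2}{N_{z_1B}}\Big\}S_1^2(z_1)+\sum_{z_2\in\{A,B\}}\Big\{\tfrac{\tilde w_2(Az_2)^2}{N_{Az_2}}+\tfrac{\tilde w_2(Bz_2)^2}{N_{Bz_2}}\Big\}S_2^2(z_2)+\sum_{z_1,z_2\in\{A,B\}}\tfrac{2\tilde w_1(z_1z_2)\tilde w_2(z_1z_2)S_{12}(z_1z_2)}{N_{z_1z_2}}$$ subject to the linear constraints $\tilde w_1(AA)+\tilde w_1(AB)+\tilde w_1(BA)+\tilde w_1(BB)=0$, $\tilde w_2(AA)+\tilde w_2(AB)+\tilde w_2(BA)+\tilde w_2(BB)=0$, and $\tilde w_1(AA)+\tilde w_1(AB)+\tilde w_2(AA)+\tilde w_2(BA)=1$.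
   Context: Setup: $N$ units, treatments $A,B$, $T$ periods; sequences $\vec z\in\{A,B\}^T$, $\vec z_{[t_1,t_2]}=z_{t_1}\cdots z_{t_2}$. Complete randomization with fixed positive group sizes $N_{\vec z}$ for $\vec z\in\mathcal{S}^{\mathrm{obs}}$; fixed potential outcomes $Y_{it}(\vec z)$, observed $Y_{it}=Y_{it}(\vec Z_i)$; randomness only from assignment. $\bar Y_t(\vec z)=N^{-1}\sum_iY_{it}(\vec z)$, $\widehat Y_t(\vec z)=N_{\vec z}^{-1}\sum_iY_{it}\mathbf1(\vec Z_i=\vec z)$. Assumption 1: $Y_{it}(\vec z)=Y_{it}(\vec z')$ whenever $\vec z_{[1,t]}=\vec z'_{[1,t]}$. Assumption 2 (order $k$): $Y_{it}(\vec z)=Y_{it}(\vec z')$ whenever $\vec z_{[\max(1,t-k+1),t]}=\vec z'_{[\max(1,t-k+1),t]}$; then $Y_{it}$ is a function $Y_{it}(a)$ of the window $a=\vec z_{[t-k+1,t]}$ for $t\ge k$. Assumption 3 (order $k$, requires Assumption 2 with same $k$): for all $a,b\in\{A,B\}^k$ and all $t'>t\ge k$, $Y_{it}(a)-Y_{it}(b)=Y_{it'}(a)-Y_{it'}(b)$. For $k=1,T=2$ this says $Y_{i1}(A)-Y_{i1}(B)=Y_{i2}(A)-Y_{i2}(B)$. Estimands: $\tau_1=\bar Y_1(A)-\bar Y_1(B)$, $\tau_2(z_1)=\bar Y_2(z_1A)-\bar Y_2(z_1B)$. Variance notation (divisor $N-1$): $S_t^2(\vec z)=\frac1{N-1}\sum_i\{Y_{it}(\vec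 z)-\bar Y_t(\vec z)\}^2$, $S_{12}(\vec z)=\frac1{N-1}\sum_i\{Y_{i1}(\vec z)-\bar Y_1(\vec z)\}\{Y_{i2}(\vec z)-\bar Y_2(\vec z)\}$; $S_1^2(z_1)$ denotes the common value $S_1^2(z_1A)=S_1^2(z_1B)$ and $S_2^2(z_2)$ the common value $S_2^2(Az_2)=S_2^2(Bz_2)$ (equal under the assumptions). A linear estimator is $\sum_{t}\sum_{\vec z\in\mathcal{S}^{\mathrm{obs}}}\tilde w_t(\vec z)\widehat Y_t(\vec z)$ with non-random weights; unbiased means expectation equals the estimand for every finite population satisfying the assumptions; BLUE means unbiased with variance, for the given population, no larger than any other unbiased linear estimator. *)

theory Defs
  imports Complex_Main "HOL-Library.FuncSet"
begin

text \<open>Two treatments; a treatment sequence over T = 2 periods is a pair (z1, z2).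
  Units are 0..N-1; periods are 1 and 2. Potential outcomes: Y i t z.\<close>

datatype trt = A | B

lemma UNIV_trt: "(UNIV :: trt set) = {A, B}"
  using trt.exhaust by auto

instance trt :: finite
  by standard (simp add: UNIV_trt)

type_synonym seq = "trt \<times> trt"
type_synonym pop = "nat \<Rightarrow> nat \<Rightarrow> seq \<Rightarrow> real"

definition assm1 :: "nat \<Rightarrow> pop \<Rightarrow> bool" where
  "assm1 N Y \<longleftrightarrow> (\<forall>i<N. \<forall>a b b'. Y i 1 (a, b) = Y i 1 (a, b'))"

definition assm2_k1 :: "nat \<Rightarrow> pop \<Rightarrow> bool" where
  "assm2_k1 N Y \<longleftrightarrow> (\<forall>i<N. (\<forall>a b b'. Y i 1 (a, b) = Y i 1 (a, b'))
                          \<and> (\<forall>a a' b. Y i 2 (a, b) = Y i 2 (a', b)))"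

text \<open>Assumption 3 with k = 1, T = 2: Y_i1(A) - Y_i1(B) = Y_i2(A) - Y_i2(B), where
  Y_i1(a) = Y i 1 (a, _) and Y_i2(a) = Y i 2 (_, a) (well-defined under Assumption 2).\<close>
definition assm3_k1 :: "nat \<Rightarrow> pop \<Rightarrow> bool" where
  "assm3_k1 N Y \<longleftrightarrow> (\<forall>i<N. Y i 1 (A, A) - Y i 1 (B, A) = Y i 2 (A, A) - Y i 2 (A, B))"

definition valid_pop :: "nat \<Rightarrow> pop \<Rightarrow> bool" where
  "valid_pop N Y \<longleftrightarrow> assm1 N Y \<and> assm2_k1 N Y \<and> assm3_k1 N Y"

definition Ybar :: "nat \<Rightarrow> pop \<Rightarrow> nat \<Rightarrow> seq \<Rightarrow> real" where
  "Ybar N Y t z = (\<Sum>i<N. Y i t z) / real N"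

definition tau :: "nat \<Rightarrow> pop \<Rightarrow> real" where
  "tau N Y = Ybar N Y 1 (A, A) - Ybar N Y 1 (B, A)"

definition assignments :: "nat \<Rightarrow> (seq \<Rightarrow> nat) \<Rightarrow> (nat \<Rightarrow> seq) set" where
  "assignments N Nz = {Z \<in> {..<N} \<rightarrow>\<^sub>E UNIV. \<forall>z. card {i\<in>{..<N}. Z i = z} = Nz z}"

definition expect :: "nat \<Rightarrow> (seq \<Rightarrow> nat) \<Rightarrow> ((nat \<Rightarrow> seq) \<Rightarrow> real) \<Rightarrow> real" where
  "expect N Nz g = (\<Sum>Z\<in>assignments N Nz. g Z) / real (card (assignments N Nz))"

definition var :: "nat \<Rightarrow> (seq \<Rightarrow> nat) \<Rightarrow> ((nat \<Rightarrow> seq) \<Rightarrow> real) \<Rightarrow> real" where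
  "var N Nz g = expect N Nz (\<lambda>Z. (g Z - expect N Nz g)^2)"

definition Yhat :: "nat \<Rightarrow> (seq \<Rightarrow> nat) \<Rightarrow> pop \<Rightarrow> nat \<Rightarrow> seq \<Rightarrow> (nat \<Rightarrow> seq) \<Rightarrow> real" where
  "Yhat N Nz Y t z Z = (\<Sum>i<N. if Z i = z then Y i t (Z i) else 0) / real (Nz z)"

definition lin_est :: "nat \<Rightarrow> (seq \<Rightarrow> nat) \<Rightarrow> pop \<Rightarrow> (seq \<Rightarrow> real) \<Rightarrow> (seq \<Rightarrow> real)
                        \<Rightarrow> (nat \<Rightarrow> seq) \<Rightarrow> real" where
  "lin_est N Nz Y w1 w2 Z = (\<Sum>z\<in>UNIV. w1 z * Yhat N Nz Y 1 z Z + w2 z * Yhat N Nz Y 2 z Z)"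

definition unbiased :: "nat \<Rightarrow> (seq \<Rightarrow> nat) \<Rightarrow> (seq \<Rightarrow> real) \<Rightarrow> (seq \<Rightarrow> real) \<Rightarrow> bool" where
  "unbiased N Nz w1 w2 \<longleftrightarrow>
     (\<forall>Y'. valid_pop N Y' \<longrightarrow> expect N Nz (lin_est N Nz Y' w1 w2) = tau N Y')"

definition BLUE :: "nat \<Rightarrow> (seq \<Rightarrow> nat) \<Rightarrow> pop \<Rightarrow> (seq \<Rightarrow> real) \<Rightarrow> (seq \<Rightarrow> real) \<Rightarrow> bool" where
  "BLUE N Nz Y w1 w2 \<longleftrightarrow> unbiased N Nz w1 w2 \<and>
     (\<forall>v1 v2. unbiased N Nz v1 v2 \<longrightarrow>
        var N Nz (lin_est N Nz Y w1 w2) \<le> var N Nz (lin_est N Nz Y v1 v2))"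

definition S2 :: "nat \<Rightarrow> pop \<Rightarrow> nat \<Rightarrow> seq \<Rightarrow> real" where
  "S2 N Y t z = (\<Sum>i<N. (Y i t z - Ybar N Y t z)^2) / (real N - 1)"

definition S12 :: "nat \<Rightarrow> pop \<Rightarrow> seq \<Rightarrow> real" where
  "S12 N Y z = (\<Sum>i<N. (Y i 1 z - Ybar N Y 1 z) * (Y i 2 z - Ybar N Y 2 z)) / (real N - 1)"

text \<open>Objective f; S_1^2(z1) := S_1^2(z1 A), S_2^2(z2) := S_2^2(A z2).\<close>
definition fobj :: "nat \<Rightarrow> (seq \<Rightarrow> nat) \<Rightarrow> pop \<Rightarrow> (seq \<Rightarrow> real) \<Rightarrow> (seq \<Rightarrow> real) \<Rightarrow> real" where
  "fobj N Nz Y w1 w2 =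
     (\<Sum>z1\<in>UNIV. (w1 (z1, A)^2 / real (Nz (z1, A)) + w1 (z1, B)^2 / real (Nz (z1, B)))
                   * S2 N Y 1 (z1, A))
   + (\<Sum>z2\<in>UNIV. (w2 (A, z2)^2 / real (Nz (A, z2)) + w2 (B, z2)^2 / real (Nz (B, z2)))
                   * S2 N Y 2 (A, z2))
   + (\<Sum>z\<in>UNIV. 2 * w1 z * w2 z * S12 N Y z / real (Nz z))"

definition constraints :: "(seq \<Rightarrow> real) \<Rightarrow> (seq \<Rightarrow> real) \<Rightarrow> bool" where
  "constraints w1 w2 \<longleftrightarrow>
     w1 (A,A) + w1 (A,B) + w1 (B,A) + w1 (B,B) = 0 \<and>
     w2 (A,A) + w2 (A,B) + w2 (B,A) + w2 (B,B) = 0 \<and>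
     w1 (A,A) + w1 (A,B) + w2 (A,A) + w2 (B,A) = 1"

end

theory Submission
  imports Defs
begin

lemma UNIV_seq: "(UNIV :: seq set) = {(A,A),(A,B),(B,A),(B,B)}"
  using trt.exhaust by (auto simp: UNIV_trt)

lemma sum_seq: "(\<Sum>z\<in>(UNIV::seq set). (f z::real)) = f (A,A) + f (A,B) + f (B,A) + f (B,B)"
  by (simp add: UNIV_seq add.assoc)

definition sw :: "nat \<Rightarrow> nat \<Rightarrow> nat \<Rightarrow> nat" where
  "sw a b x = (if x = a then b else if x = b then a else x)"

lemma sw_sw[simp]: "sw a b (sw a b x) = x"
  by (simp add: sw_def)

lemma sw_inj: "inj (sw a b)"
  by (metis injI sw_sw)

lemma finite_assign: "finite (assignments N Nz)"
proof -
  have "assignments N Nz \<subseteq> {..<N} \<rightarrow>\<^sub>E UNIV" unfolding assignments_def by auto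
  moreover have "finite ({..<N} \<rightarrow>\<^sub>E (UNIV::seq set))" by (intro finite_PiE) auto
  ultimately show ?thesis by (rule finite_subset)
qed

lemma assign_sw:
  assumes Z: "Z \<in> assignments N Nz" and a: "a < N" and b: "b < N"
  shows "Z \<circ> sw a b \<in> assignments N Nz"
proof -
  have ext: "Z \<in> {..<N} \<rightarrow>\<^sub>E UNIV" and c: "\<And>z. card {i\<in>{..<N}. Z i = z} = Nz z"
    using Z unfolding assignments_def by auto
  have "Z \<circ> sw a b \<in> {..<N} \<rightarrow>\<^sub>E UNIV"
  proof -
    have "\<And>i. i \<notin> {..<N} \<Longrightarrow> (Z \<circ> sw a b) i = undefined"
      using ext a b by (auto simp: sw_def PiE_def extensional_def)
    then show ?thesis by (auto simp: PiE_def extensional_def)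
  qed
  moreover have "card {i\<in>{..<N}. (Z \<circ> sw a b) i = z} = Nz z" for z
  proof -
    have "{i\<in>{..<N}. (Z \<circ> sw a b) i = z} = sw a b ` {i\<in>{..<N}. Z i = z}"
    proof (rule set_eqI, rule iffI)
      fix x assume "x \<in> {i\<in>{..<N}. (Z \<circ> sw a b) i = z}"
      then have "sw a b x \<in> {i\<in>{..<N}. Z i = z}" using a b by (auto simp: sw_def)
      then show "x \<in> sw a b ` {i\<in>{..<N}. Z i = z}" by (metis image_eqI sw_sw)
    next
      fix x assume "x \<in> sw a b ` {i\<in>{..<N}. Z i = z}"
      then show "x \<in> {i\<in>{..<N}. (Z \<circ> sw a b) i = z}" using a b by (auto simp: sw_def)
    qed
    then show ?thesis using c card_image[OF inj_on_subset[OF sw_inj]] by (metis subset_UNIV)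
  qed
  ultimately show ?thesis unfolding assignments_def by auto
qed

lemma sum_sw:
  assumes a: "a < N" and b: "b < N"
  shows "(\<Sum>Z\<in>assignments N Nz. F (Z \<circ> sw a b)) = (\<Sum>Z\<in>assignments N Nz. (F Z :: real))"
  by (rule sum.reindex_bij_witness[of _ "\<lambda>Z. Z \<circ> sw a b" "\<lambda>Z. Z \<circ> sw a b"])
     (auto simp: o_def intro: assign_sw[OF _ a b, unfolded o_def])

lemma ind_sum:
  assumes "Z \<in> assignments N Nz"
  shows "(\<Sum>i<N. (if Z i = z then 1 else 0 :: real)) = real (Nz z)"
proof -
  have "(\<Sum>i<N. (if Z i = z then 1 else 0 :: real)) = real (card {i\<in>{..<N}. Z i = z})"
    by (simp add: sum.If_cases Int_def lessThan_def)
  then show ?thesis using assms unfolding assignments_def by (cases z) auto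
qed

lemma F1:
  assumes i: "i < N"
  shows "(\<Sum>Z\<in>assignments N Nz. (if Z i = z then 1 else 0::real)) * real N
         = real (card (assignments N Nz)) * real (Nz z)"
proof -
  let ?Om = "assignments N Nz"
  let ?S = "\<lambda>i. (\<Sum>Z\<in>?Om. (if Z i = z then 1 else 0::real))"
  have eq: "?S k = ?S i" if k: "k < N" for k
  proof -
    have "?S k = (\<Sum>Z\<in>?Om. (\<lambda>Z. if Z i = z then 1 else 0::real) (Z \<circ> sw i k))"
      by (simp add: sw_def)
    also have "\<dots> = ?S i" by (rule sum_sw[OF i k])
    finally show ?thesis .
  qed
  have "(\<Sum>k<N. ?S k) = ?S i * real N" using eq by simp
  moreover have "(\<Sum>k<N. ?S k) = (\<Sum>Z\<in>?Om. (\<Sum>k<N. (if Z k = z then 1 else 0::real)))"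
    by (rule sum.swap)
  moreover have "\<dots> = (\<Sum>Z\<in>?Om. real (Nz z))" by (rule sum.cong) (auto simp: ind_sum)
  ultimately show ?thesis by simp
qed

lemma F2:
  assumes i: "i < N" and j: "j < N" and ij: "i \<noteq> j"
  shows "(\<Sum>Z\<in>assignments N Nz. (if Z i = z then 1 else 0::real) * (if Z j = z' then 1 else 0))
            * (real N - 1)
         = (real (Nz z') - (if z = z' then 1 else 0)) * (\<Sum>Z\<in>assignments N Nz. (if Z i = z then 1 else 0::real))"
proof -
  let ?Om = "assignments N Nz"
  let ?P = "\<lambda>j. (\<Sum>Z\<in>?Om. (if Z i = z then 1 else 0::real) * (if Z j = z' then 1 else 0))"
  have eq: "?P k = ?P j" if k: "k < N" "k \<noteq> i" for k
  proof -
    have "?P k = (\<Sum>Z\<in>?Om. (\<lambda>Z. (if Z i = z then 1 else 0::real) * (if Z j = z' then 1 else 0)) (Z \<circ> sw j k))"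
      using ij k by (simp add: sw_def)
    also have "\<dots> = ?P j" by (rule sum_sw[OF j k(1)])
    finally show ?thesis .
  qed
  have cardD: "card ({..<N} - {i}) = N - 1" using i by simp
  have "(\<Sum>k\<in>{..<N} - {i}. ?P k) = ?P j * (real N - 1)"
    using eq cardD i by (simp add: of_nat_diff)
  moreover have "(\<Sum>k\<in>{..<N} - {i}. ?P k) =
     (\<Sum>Z\<in>?Om. (if Z i = z then 1 else 0::real) * (\<Sum>k\<in>{..<N} - {i}. (if Z k = z' then 1 else 0)))"
    by (simp add: sum.swap[of _ "{..<N} - {i}"] sum_distrib_left)
  moreover have "\<dots> = (\<Sum>Z\<in>?Om. (real (Nz z') - (if z = z' then 1 else 0)) * (if Z i = z then 1 else 0::real))"
  proof (rule sum.cong)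
    fix Z assume Z: "Z \<in> ?Om"
    have "(\<Sum>k\<in>{..<N} - {i}. (if Z k = z' then 1 else 0::real)) = real (Nz z') - (if Z i = z' then 1 else 0)"
      using ind_sum[OF Z, of z'] i by (simp add: sum_diff1)
    then show "(if Z i = z then 1 else 0::real) * (\<Sum>k\<in>{..<N} - {i}. (if Z k = z' then 1 else 0)) =
       (real (Nz z') - (if z = z' then 1 else 0)) * (if Z i = z then 1 else 0::real)" by auto
  qed simp
  ultimately show ?thesis by (simp add: sum_distrib_left)
qed

lemma Pform:
  assumes i: "i < N" and j: "j < N" and N2: "N \<ge> 2"
  shows "(\<Sum>Z\<in>assignments N Nz. (if Z i = z then 1 else 0::real) * (if Z j = z' then 1 else 0))
     = real (card (assignments N Nz)) *
       (real (Nz z) * (real (Nz z') - (if z = z' then 1 else 0)) / (real N * (real N - 1))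
        + (if i = j then (if z = z' then real (Nz z) / real N else 0)
             - real (Nz z) * (real (Nz z') - (if z = z' then 1 else 0)) / (real N * (real N - 1)) else 0))"
proof (cases "i = j")
  case True
  have "(\<Sum>Z\<in>assignments N Nz. (if Z i = z then 1 else 0::real) * (if Z j = z' then 1 else 0))
        = (if z = z' then (\<Sum>Z\<in>assignments N Nz. (if Z i = z then 1 else 0::real)) else 0)"
    using True by (cases "z = z'") (auto intro!: sum.cong sum.neutral)
  moreover have "(\<Sum>Z\<in>assignments N Nz. (if Z i = z then 1 else 0::real)) = 
      real (card (assignments N Nz)) * real (Nz z) / real N"
    using F1[OF i, where Nz=Nz and z=z] N2 by (simp add: field_simps)
  ultimately show ?thesis using True by (cases "z = z'") auto
next
  case False
  have N1: "real N - 1 > 0" "real N > 0" using N2 by auto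
  have "(\<Sum>Z\<in>assignments N Nz. (if Z i = z then 1 else 0::real)) = 
      real (card (assignments N Nz)) * real (Nz z) / real N"
    using F1[OF i, where Nz=Nz and z=z] N2 by (simp add: field_simps)
  with F2[OF i j False, where Nz=Nz and z=z and z'=z'] N1 show ?thesis using False
    by (simp add: field_simps)
qed

lemma var_form:
  fixes X :: "nat \<Rightarrow> seq \<Rightarrow> real"
  assumes N2: "N \<ge> 2" and pos: "\<forall>z. Nz z \<ge> 1" and Mpos: "card (assignments N Nz) > 0"
  defines "g \<equiv> \<lambda>Z. \<Sum>z\<in>UNIV. (\<Sum>i<N. (if Z i = z then 1 else 0) * X i z) / real (Nz z)"
  shows "expect N Nz g = (\<Sum>z\<in>UNIV. \<Sum>i<N. X i z) / real N"
    and "var N Nz g = (\<Sum>z\<in>UNIV. ((\<Sum>i<N. (X i z)^2) - (\<Sum>i<N. X i z)^2 / real N) / ((real N - 1) * real (Nz z)))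
        - ((\<Sum>i<N. (\<Sum>z\<in>UNIV. X i z)^2) - (\<Sum>i<N. \<Sum>z\<in>UNIV. X i z)^2 / real N) / (real N * (real N - 1))"
proof -
  define Om where "Om = assignments N Nz"
  define M where "M = real (card Om)"
  have M0: "M > 0" using Mpos by (simp add: M_def Om_def)
  have NN: "real N > 0" "real N - 1 > 0" using N2 by auto
  have nz: "real (Nz z) > 0" for z using pos by (metis of_nat_0_less_iff not_one_le_zero neq0_conv)
  have nz0: "Nz z \<noteq> 0" for z using pos by (metis not_one_le_zero)
  define T where "T z = (\<Sum>i<N. X i z)" for z
  define Q where "Q z z' = (\<Sum>i<N. X i z * X i z')" for z z'
  define e where "e = (\<Sum>z\<in>UNIV. \<Sum>i<N. X i z) / real N"
  have S1: "(\<Sum>Z\<in>Om. g Z) = M * e"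
  proof -
    have "(\<Sum>Z\<in>Om. g Z) = (\<Sum>z\<in>UNIV. (\<Sum>i<N. X i z * (\<Sum>Z\<in>Om. (if Z i = z then 1 else 0::real))) / real (Nz z))"
      unfolding g_def
      by (simp only: sum.swap[where A=Om] sum_divide_distrib[symmetric] sum_distrib_left mult.commute)
    also have "\<dots> = (\<Sum>z\<in>UNIV. (\<Sum>i<N. X i z * (M * real (Nz z) / real N)) / real (Nz z))"
    proof (rule sum.cong[OF refl], rule arg_cong[where f="\<lambda>x. x / _"], rule sum.cong[OF refl])
      fix z i assume "i \<in> {..<N}"
      then show "X i z * (\<Sum>Z\<in>Om. (if Z i = z then 1 else 0::real)) = X i z * (M * real (Nz z) / real N)"
        using F1[where i=i and N=N and Nz=Nz and z=z] NN by (simp add: M_def Om_def field_simps)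
    qed
    also have "\<dots> = M * e"
      using nz NN by (simp add: e_def sum_distrib_left sum_divide_distrib field_simps nz0)
    finally show ?thesis .
  qed
  show "expect N Nz g = (\<Sum>z\<in>UNIV. \<Sum>i<N. X i z) / real N"
    unfolding expect_def using S1 M0 by (simp add: Om_def[symmetric] M_def[symmetric] e_def)
  define al where "al z z' = real (Nz z) * (real (Nz z') - (if z = z' then 1 else 0)) / (real N * (real N - 1))" for z z'
  define be where "be z z' = (if z = z' then real (Nz z) / real N else 0) - al z z'" for z z'
  define ind where "ind Z i z = (if Z i = z then 1 else 0::real)" for Z :: "nat \<Rightarrow> seq" and i z
  have g2: "(g Z)^2 = (\<Sum>z\<in>UNIV. \<Sum>z'\<in>UNIV. \<Sum>i<N. \<Sum>j<N.
      (X i z * X j z' / (real (Nz z) * real (Nz z'))) * (ind Z i z * ind Z j z'))" for Z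
  proof -
    have "(g Z)^2 = (\<Sum>z\<in>UNIV. \<Sum>z'\<in>UNIV. ((\<Sum>i<N. ind Z i z * X i z) / real (Nz z)) * ((\<Sum>j<N. ind Z j z' * X j z') / real (Nz z')))"
      unfolding g_def power2_eq_square sum_product ind_def by simp
    also have "\<dots> = (\<Sum>z\<in>UNIV. \<Sum>z'\<in>UNIV. \<Sum>i<N. \<Sum>j<N.
      (X i z * X j z' / (real (Nz z) * real (Nz z'))) * (ind Z i z * ind Z j z'))"
    proof (intro sum.cong refl)
      fix z z'
      have "((\<Sum>i<N. ind Z i z * X i z) / real (Nz z)) * ((\<Sum>j<N. ind Z j z' * X j z') / real (Nz z'))
          = (\<Sum>i<N. \<Sum>j<N. (ind Z i z * X i z) * (ind Z j z' * X j z')) / (real (Nz z) * real (Nz z'))"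
        by (simp add: sum_product)
      also have "\<dots> = (\<Sum>i<N. \<Sum>j<N.
          (X i z * X j z' / (real (Nz z) * real (Nz z'))) * (ind Z i z * ind Z j z'))"
        by (simp add: sum_divide_distrib mult_ac)
      finally show "((\<Sum>i<N. ind Z i z * X i z) / real (Nz z)) * ((\<Sum>j<N. ind Z j z' * X j z') / real (Nz z'))
          = (\<Sum>i<N. \<Sum>j<N.
          (X i z * X j z' / (real (Nz z) * real (Nz z'))) * (ind Z i z * ind Z j z'))" .
    qed
    finally show ?thesis .
  qed
  have S2a: "(\<Sum>Z\<in>Om. (g Z)^2) = (\<Sum>z\<in>UNIV. \<Sum>z'\<in>UNIV. \<Sum>i<N. \<Sum>j<N.
      (X i z * X j z' / (real (Nz z) * real (Nz z'))) * (\<Sum>Z\<in>Om. ind Z i z * ind Z j z'))"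
    unfolding g2 by (simp only: sum.swap[where A=Om] sum_distrib_left)
  also have "\<dots> = (\<Sum>z\<in>UNIV. \<Sum>z'\<in>UNIV. \<Sum>i<N. \<Sum>j<N.
      (X i z * X j z' / (real (Nz z) * real (Nz z'))) * (M * (al z z' + (if i = j then be z z' else 0))))"
    by (intro sum.cong refl) (simp add: ind_def Pform[OF _ _ N2] Om_def M_def al_def be_def)
  also have "\<dots> = (\<Sum>z\<in>UNIV. \<Sum>z'\<in>UNIV. M * (al z z' * T z * T z' + be z z' * Q z z') / (real (Nz z) * real (Nz z')))"
  proof (intro sum.cong refl)
    fix z z'
    have "(\<Sum>i<N. \<Sum>j<N. (X i z * X j z' / (real (Nz z) * real (Nz z'))) * (M * (al z z' + (if i = j then be z z' else 0))))
       = (\<Sum>i<N. \<Sum>j<N. (M * al z z' / (real (Nz z) * real (Nz z'))) * (X i z * X j z')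
            + (if i = j then (M * be z z' / (real (Nz z) * real (Nz z'))) * (X i z * X i z') else 0))"
      by (intro sum.cong refl) (auto simp: algebra_simps)
    also have "\<dots> = (M * al z z' / (real (Nz z) * real (Nz z'))) * (\<Sum>i<N. \<Sum>j<N. X i z * X j z')
         + (M * be z z' / (real (Nz z) * real (Nz z'))) * Q z z'"
      unfolding Q_def by (simp add: sum.distrib sum_distrib_left sum_divide_distrib mult_ac)
    also have "\<dots> = M * (al z z' * T z * T z' + be z z' * Q z z') / (real (Nz z) * real (Nz z'))"
    proof -
      have "(\<Sum>i<N. \<Sum>j<N. X i z * X j z') = T z * T z'" by (simp add: T_def sum_product)
      then show ?thesis by (simp add: add_divide_distrib algebra_simps)
    qed
    finally show "(\<Sum>i<N. \<Sum>j<N. (X i z * X j z' / (real (Nz z) * real (Nz z'))) * (M * (al z z' + (if i = j then be z z' else 0))))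
       = M * (al z z' * T z * T z' + be z z' * Q z z') / (real (Nz z) * real (Nz z'))" .
  qed
  also have "\<dots> = M * ((\<Sum>z\<in>UNIV. T z)^2 / (real N * (real N - 1))
       - (\<Sum>z\<in>UNIV. (T z)^2 / (real (Nz z) * real N * (real N - 1)))
       + (\<Sum>z\<in>UNIV. Q z z / ((real N - 1) * real (Nz z)))
       - (\<Sum>z\<in>UNIV. \<Sum>z'\<in>UNIV. Q z z') / (real N * (real N - 1)))"
  proof -
    have pw: "M * (al z z' * T z * T z' + be z z' * Q z z') / (real (Nz z) * real (Nz z')) =
      M * (T z * T z' / (real N * (real N - 1))
        - (if z = z' then (T z)^2 / (real (Nz z) * real N * (real N - 1)) else 0)
        + (if z = z' then Q z z / ((real N - 1) * real (Nz z)) else 0)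
        - Q z z' / (real N * (real N - 1)))" for z z'
    proof (cases "z = z'")
      case True
      then show ?thesis using nz[of z] NN unfolding al_def be_def
        by (simp add: divide_simps power2_eq_square) (simp add: algebra_simps)
    next
      case False
      then show ?thesis using nz[of z] nz[of z'] NN unfolding al_def be_def
        by (simp add: divide_simps) (simp add: algebra_simps)
    qed
    show ?thesis
      by (simp only: pw, simp add: sum.distrib sum_subtractf sum_distrib_left[symmetric]
          sum_divide_distrib[symmetric] power2_eq_square sum_product algebra_simps, simp add: sum_distrib_left)
  qed
  finally have S2: "(\<Sum>Z\<in>Om. (g Z)^2) = M * ((\<Sum>z\<in>UNIV. T z)^2 / (real N * (real N - 1))
       - (\<Sum>z\<in>UNIV. (T z)^2 / (real (Nz z) * real N * (real N - 1)))
       + (\<Sum>z\<in>UNIV. Q z z / ((real N - 1) * real (Nz z)))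
       - (\<Sum>z\<in>UNIV. \<Sum>z'\<in>UNIV. Q z z') / (real N * (real N - 1)))" .
  have Eg: "expect N Nz g = e" using S1 M0 by (simp add: expect_def Om_def[symmetric] M_def[symmetric])
  have V: "var N Nz g = (\<Sum>Z\<in>Om. (g Z)^2) / M - e^2"
  proof -
    have "(\<Sum>Z\<in>Om. (g Z - e)^2) = (\<Sum>Z\<in>Om. (g Z)^2) - 2*e*(\<Sum>Z\<in>Om. g Z) + M*e^2"
      by (simp add: power2_diff sum.distrib sum_subtractf sum_distrib_left sum_distrib_right M_def mult_ac)
    then show ?thesis unfolding var_def Eg using S1 M0
      by (simp add: expect_def Om_def[symmetric] M_def[symmetric] divide_simps power2_eq_square)
  qed
  have sumT: "(\<Sum>z\<in>UNIV. T z) = (\<Sum>i<N. \<Sum>z\<in>UNIV. X i z)" unfolding T_def by (rule sum.swap)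
  have sumQ: "(\<Sum>z\<in>UNIV. \<Sum>z'\<in>UNIV. Q z z') = (\<Sum>i<N. (\<Sum>z\<in>UNIV. X i z)^2)"
    unfolding Q_def power2_eq_square sum_product by (simp only: sum.swap[where A="{..<N}"])
  have sumD: "(\<Sum>z\<in>UNIV. ((\<Sum>i<N. (X i z)^2) - (\<Sum>i<N. X i z)^2 / real N) / ((real N - 1) * real (Nz z)))
     = (\<Sum>z\<in>UNIV. Q z z / ((real N - 1) * real (Nz z))) - (\<Sum>z\<in>UNIV. (T z)^2 / (real (Nz z) * real N * (real N - 1)))"
  proof -
    have "((\<Sum>i<N. (X i z)^2) - (\<Sum>i<N. X i z)^2 / real N) / ((real N - 1) * real (Nz z))
      = Q z z / ((real N - 1) * real (Nz z)) - (T z)^2 / (real (Nz z) * real N * (real N - 1))" for z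
      using nz[of z] NN unfolding Q_def T_def
      by (simp add: divide_simps power2_eq_square)
    then show ?thesis by (simp add: sum_subtractf)
  qed
  show "var N Nz g = (\<Sum>z\<in>UNIV. ((\<Sum>i<N. (X i z)^2) - (\<Sum>i<N. X i z)^2 / real N) / ((real N - 1) * real (Nz z)))
        - ((\<Sum>i<N. (\<Sum>z\<in>UNIV. X i z)^2) - (\<Sum>i<N. \<Sum>z\<in>UNIV. X i z)^2 / real N) / (real N * (real N - 1))"
    unfolding V S2 sumD sumQ[symmetric] sumT[symmetric] using M0 NN
    unfolding e_def T_def[symmetric]
    by (simp add: divide_simps power2_eq_square) (simp add: algebra_simps)
qed
lemma sum_seq_nat: "(\<Sum>z\<in>(UNIV::seq set). (f z::nat)) = f (A,A) + f (A,B) + f (B,A) + f (B,B)"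
  by (simp add: UNIV_seq add.assoc)

lemma assign_ne:
  assumes "(\<Sum>z\<in>UNIV. Nz z) = N"
  shows "card (assignments N Nz) > 0"
proof -
  define a where "a = Nz (A,A)"
  define b where "b = Nz (A,B)"
  define c where "c = Nz (B,A)"
  define d where "d = Nz (B,B)"
  have N: "N = a + b + c + d" using assms by (simp add: sum_seq_nat a_def b_def c_def d_def)
  define Z0 where "Z0 i = (if i < a then (A,A) else if i < a+b then (A,B) else if i < a+b+c then (B,A)
     else if i < N then (B,B) else undefined)" for i
  have "Z0 \<in> {..<N} \<rightarrow>\<^sub>E UNIV" unfolding PiE_def extensional_def Z0_def using N by auto
  moreover have "card {i\<in>{..<N}. Z0 i = z} = Nz z" for z
  proof -
    obtain x y where z: "z = (x,y)" by (cases z)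
    show ?thesis
    proof (cases x; cases y)
      assume "x = A" "y = A"
      then have "{i\<in>{..<N}. Z0 i = z} = {..<a}" using N z by (auto simp: Z0_def)
      then show ?thesis using z \<open>x = A\<close> \<open>y = A\<close> by (simp add: a_def)
    next
      assume "x = A" "y = B"
      then have "{i\<in>{..<N}. Z0 i = z} = {a..<a+b}" using N z by (auto simp: Z0_def)
      then show ?thesis using z \<open>x = A\<close> \<open>y = B\<close> by (simp add: b_def)
    next
      assume "x = B" "y = A"
      then have "{i\<in>{..<N}. Z0 i = z} = {a+b..<a+b+c}" using N z by (auto simp: Z0_def)
      then show ?thesis using z \<open>x = B\<close> \<open>y = A\<close> by (simp add: c_def)
    next
      assume "x = B" "y = B"
      then have "{i\<in>{..<N}. Z0 i = z} = {a+b+c..<N}" using N z by (auto simp: Z0_def)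
      then show ?thesis using z \<open>x = B\<close> \<open>y = B\<close> N by (simp add: d_def)
    qed
  qed
  ultimately have "Z0 \<in> assignments N Nz" unfolding assignments_def by auto
  then show ?thesis using finite_assign[of N Nz] card_gt_0_iff by blast
qed

lemma alg:
  fixes w1 w2 f1 f2 :: "seq \<Rightarrow> real"
  assumes "constraints w1 w2"
    and h1: "\<And>a b. f1 (a,b) = f1 (a,A)" and h2: "\<And>a b. f2 (a,b) = f2 (A,b)"
    and h3: "f1 (A,A) - f1 (B,A) = f2 (A,A) - f2 (A,B)"
  shows "(\<Sum>z\<in>UNIV. w1 z * f1 z + w2 z * f2 z) = f1 (A,A) - f1 (B,A)"
proof -
  have c: "w1 (B,B) = - w1 (A,A) - w1 (A,B) - w1 (B,A)" "w2 (B,B) = - w2 (A,A) - w2 (A,B) - w2 (B,A)"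
     "w2 (B,A) = 1 - w1 (A,A) - w1 (A,B) - w2 (A,A)"
    using assms(1) unfolding constraints_def by linarith+
  have f: "f1 (A,B) = f1 (A,A)" "f1 (B,B) = f1 (B,A)" "f2 (B,A) = f2 (A,A)" "f2 (B,B) = f2 (A,B)"
     "f2 (A,B) = f2 (A,A) - f1 (A,A) + f1 (B,A)"
    using h1 h2 h3 by (metis, metis, metis, metis, linarith)
  show ?thesis unfolding sum_seq f c
    by (simp add: algebra_simps)
qed

lemma lin_eq:
  "lin_est N Nz Y w1 w2 = (\<lambda>Z. \<Sum>z\<in>UNIV. (\<Sum>i<N. (if Z i = z then 1 else 0) *
      (w1 z * Y i 1 z + w2 z * Y i 2 z)) / real (Nz z))"
proof
  fix Z
  have e: "(\<Sum>i<N. if Z i = z then Y i t (Z i) else 0) = (\<Sum>i<N. (if Z i = z then 1 else 0) * Y i t z)" for t z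
    by (rule sum.cong) auto
  show "lin_est N Nz Y w1 w2 Z = (\<Sum>z\<in>UNIV. (\<Sum>i<N. (if Z i = z then 1 else 0) *
      (w1 z * Y i 1 z + w2 z * Y i 2 z)) / real (Nz z))"
    unfolding lin_est_def Yhat_def e
    by (rule sum.cong[OF refl]) (simp add: sum.distrib sum_distrib_left algebra_simps add_divide_distrib)
qed

lemma quad:
  fixes U V :: "nat \<Rightarrow> real"
  shows "(\<Sum>i<N. (a*U i + b*V i)^2) - (\<Sum>i<N. a*U i + b*V i)^2 / K
    = a^2 * ((\<Sum>i<N. (U i)^2) - (\<Sum>i<N. U i)^2 / K) + 2*a*b*((\<Sum>i<N. U i * V i) - (\<Sum>i<N. U i)*(\<Sum>i<N. V i)/K)
      + b^2 * ((\<Sum>i<N. (V i)^2) - (\<Sum>i<N. V i)^2 / K)"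
proof -
  have 1: "(\<Sum>i<N. (a*U i + b*V i)^2) = a^2 * (\<Sum>i<N. (U i)^2) + 2*a*b*(\<Sum>i<N. U i * V i) + b^2 * (\<Sum>i<N. (V i)^2)"
    by (simp add: power2_sum sum.distrib sum_distrib_left power_mult_distrib mult_ac)
  have 2: "(\<Sum>i<N. a*U i + b*V i) = a * (\<Sum>i<N. U i) + b * (\<Sum>i<N. V i)"
    by (simp add: sum.distrib sum_distrib_left)
  show ?thesis unfolding 1 2 by (simp add: power2_sum power_mult_distrib algebra_simps add_divide_distrib diff_divide_distrib)
qed

lemma centered:
  fixes U V :: "nat \<Rightarrow> real"
  assumes "N > 0"
  shows "(\<Sum>i<N. (U i - (\<Sum>i<N. U i) / real N) * (V i - (\<Sum>i<N. V i) / real N))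
     = (\<Sum>i<N. U i * V i) - (\<Sum>i<N. U i) * (\<Sum>i<N. V i) / real N"
proof -
  have gen: "(\<Sum>i<N. (U i - p) * (V i - q)) = (\<Sum>i<N. U i * V i) - q * (\<Sum>i<N. U i) - p * (\<Sum>i<N. V i) + real N * p * q" for p q
    by (simp add: algebra_simps sum.distrib sum_subtractf sum_distrib_left sum_distrib_right)
  show ?thesis unfolding gen using assms by (simp add: field_simps)
qed

lemma S2_eq: "N > 0 \<Longrightarrow> S2 N Y t z = ((\<Sum>i<N. (Y i t z)^2) - (\<Sum>i<N. Y i t z)^2 / real N) / (real N - 1)"
  unfolding S2_def Ybar_def using centered[of N "\<lambda>i. Y i t z" "\<lambda>i. Y i t z"]
  by (simp add: power2_eq_square)

lemma S12_eq: "N > 0 \<Longrightarrow> S12 N Y z = ((\<Sum>i<N. Y i 1 z * Y i 2 z) - (\<Sum>i<N. Y i 1 z) * (\<Sum>i<N. Y i 2 z) / real N) / (real N - 1)"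
  unfolding S12_def Ybar_def using centered[of N "\<lambda>i. Y i 1 z" "\<lambda>i. Y i 2 z"]
  by simp

lemma divs: "((a::real)^2 * P + 2*a*b*R + b^2 * Q) / ((K - 1) * n) = (a^2 * (P / (K - 1)) + b^2 * (Q / (K - 1)) + 2*a*b*(R / (K - 1))) / n"
  by (simp add: add_divide_distrib divide_divide_eq_left[symmetric] algebra_simps)

theorem proposition3:
  fixes N :: nat and Nz :: "seq \<Rightarrow> nat" and Y :: pop
  assumes "\<forall>z. Nz z \<ge> 1"
    and "(\<Sum>z\<in>UNIV. Nz z) = N"
    and "valid_pop N Y"
  shows "\<forall>w1 w2. BLUE N Nz Y w1 w2 \<longleftrightarrow>
           (constraints w1 w2 \<and> (\<forall>v1 v2. constraints v1 v2 \<longrightarrow> fobj N Nz Y w1 w2 \<le> fobj N Nz Y v1 v2))"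
proof -
  note pos = assms(1)
  have N4: "N \<ge> 4"
  proof -
    have "Nz (A,A) \<ge> 1" "Nz (A,B) \<ge> 1" "Nz (B,A) \<ge> 1" "Nz (B,B) \<ge> 1" using pos by auto
    then show ?thesis using assms(2) unfolding sum_seq_nat by linarith
  qed
  then have N2: "N \<ge> 2" and N0: "N > 0" by auto
  have Mpos: "card (assignments N Nz) > 0" by (rule assign_ne[OF assms(2)])
  have nz0: "real (Nz z) \<noteq> 0" for z using pos by (metis not_one_le_zero of_nat_eq_0_iff)
  have Elin: "expect N Nz (lin_est N Nz Y' w1 w2) = (\<Sum>z\<in>UNIV. w1 z * Ybar N Y' 1 z + w2 z * Ybar N Y' 2 z)"
    for Y' w1 w2
  proof -
    have "expect N Nz (lin_est N Nz Y' w1 w2) = (\<Sum>z\<in>UNIV. \<Sum>i<N. w1 z * Y' i 1 z + w2 z * Y' i 2 z) / real N"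
      unfolding lin_eq by (rule var_form(1)[OF N2 pos Mpos])
    also have "\<dots> = (\<Sum>z\<in>UNIV. w1 z * Ybar N Y' 1 z + w2 z * Ybar N Y' 2 z)"
      unfolding sum_divide_distrib
      by (rule sum.cong[OF refl]) (simp add: Ybar_def sum.distrib sum_distrib_left add_divide_distrib sum_divide_distrib)
    finally show ?thesis .
  qed
  have unb_iff: "unbiased N Nz w1 w2 \<longleftrightarrow> constraints w1 w2" for w1 w2
  proof
    assume c: "constraints w1 w2"
    show "unbiased N Nz w1 w2" unfolding unbiased_def
    proof (intro allI impI)
      fix Y' assume v: "valid_pop N Y'"
      have h1: "Ybar N Y' 1 (a,b) = Ybar N Y' 1 (a,A)" for a b
        using v unfolding valid_pop_def assm1_def Ybar_def by (metis (no_types, lifting) lessThan_iff sum.cong)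
      have h2: "Ybar N Y' 2 (a,b) = Ybar N Y' 2 (A,b)" for a b
        using v unfolding valid_pop_def assm2_k1_def Ybar_def by (metis (no_types, lifting) lessThan_iff sum.cong)
      have "(\<Sum>i<N. Y' i 1 (A,A) - Y' i 1 (B,A)) = (\<Sum>i<N. Y' i 2 (A,A) - Y' i 2 (A,B))"
        using v unfolding valid_pop_def assm3_k1_def by (intro sum.cong) auto
      then have h3: "Ybar N Y' 1 (A,A) - Ybar N Y' 1 (B,A) = Ybar N Y' 2 (A,A) - Ybar N Y' 2 (A,B)"
        unfolding Ybar_def by (simp add: sum_subtractf diff_divide_distrib[symmetric])
      show "expect N Nz (lin_est N Nz Y' w1 w2) = tau N Y'"
        unfolding Elin tau_def by (rule alg[OF c h1 h2 h3])
    qed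
  next
    assume u: "unbiased N Nz w1 w2"
    define Yc where "Yc a b c = (\<lambda>(i::nat) (t::nat) (z::seq). if t = 1 then (if fst z = A then a else b)
        else (if snd z = A then c + a - b else (c::real)))" for a b c
    have vc: "valid_pop N (Yc a b c)" for a b c
      unfolding valid_pop_def assm1_def assm2_k1_def assm3_k1_def Yc_def by auto
    have Yb: "Ybar N (Yc a b c) t z = Yc a b c 0 t z" for a b c t z
      using N0 unfolding Ybar_def Yc_def by simp
    have e: "(\<Sum>z\<in>UNIV. w1 z * Yc a b c 0 1 z + w2 z * Yc a b c 0 2 z) = a - b" for a b c
    proof -
      have "expect N Nz (lin_est N Nz (Yc a b c) w1 w2) = tau N (Yc a b c)"
        using u vc[of a b c] unfolding unbiased_def by blast
      then show ?thesis unfolding Elin tau_def Yb by (simp add: Yc_def)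
    qed
    have e1: "w1 (A,A) + w1 (A,B) + w2 (A,A) + w2 (B,A) = 1" using e[of 1 0 0] by (simp add: sum_seq Yc_def)
    have e2: "w2 (A,A) + w2 (A,B) + w2 (B,A) + w2 (B,B) = 0" using e[of 0 0 1] by (simp add: sum_seq Yc_def)
    have e3: "w1 (B,A) + w1 (B,B) - w2 (A,A) - w2 (B,A) = -1" using e[of 0 1 0] by (simp add: sum_seq Yc_def)
    show "constraints w1 w2" unfolding constraints_def using e1 e2 e3 by linarith
  qed
  define d where "d i = Y i 1 (A,A) - Y i 1 (B,A)" for i
  define K0 where "K0 = ((\<Sum>i<N. (d i)^2) - (\<Sum>i<N. d i)^2 / real N) / (real N * (real N - 1))"
  have vY1: "Y i 1 (a,b) = Y i 1 (a,A)" if "i < N" for i a b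
    using assms(3) that unfolding valid_pop_def assm1_def by metis
  have vY2: "Y i 2 (a,b) = Y i 2 (A,b)" if "i < N" for i a b
    using assms(3) that unfolding valid_pop_def assm2_k1_def by metis
  have vY3: "Y i 1 (A,A) - Y i 1 (B,A) = Y i 2 (A,A) - Y i 2 (A,B)" if "i < N" for i
    using assms(3) that unfolding valid_pop_def assm3_k1_def by metis
  have S21: "S2 N Y 1 (a,b) = S2 N Y 1 (a,A)" for a b
  proof -
    have "Ybar N Y 1 (a,b) = Ybar N Y 1 (a,A)" unfolding Ybar_def by (rule arg_cong[where f="\<lambda>x. x / _"], rule sum.cong) (simp, metis lessThan_iff vY1)
    then show ?thesis unfolding S2_def by (intro arg_cong[where f="\<lambda>x. x / _"] sum.cong) (simp, metis lessThan_iff vY1)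
  qed
  have S22: "S2 N Y 2 (a,b) = S2 N Y 2 (A,b)" for a b
  proof -
    have "Ybar N Y 2 (a,b) = Ybar N Y 2 (A,b)" unfolding Ybar_def by (rule arg_cong[where f="\<lambda>x. x / _"], rule sum.cong) (simp, metis lessThan_iff vY2)
    then show ?thesis unfolding S2_def by (intro arg_cong[where f="\<lambda>x. x / _"] sum.cong) (simp, metis lessThan_iff vY2)
  qed
  have fobj_eq: "fobj N Nz Y w1 w2 = (\<Sum>z\<in>UNIV. (w1 z^2 * S2 N Y 1 z + w2 z^2 * S2 N Y 2 z + 2 * w1 z * w2 z * S12 N Y z) / real (Nz z))"
    for w1 w2
    unfolding fobj_def sum_seq UNIV_trt using S21[of A B] S21[of B B] S22[of B A] S22[of B B]
    by (simp add: add_divide_distrib algebra_simps)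
  have Vw: "var N Nz (lin_est N Nz Y w1 w2) = fobj N Nz Y w1 w2 - K0" if c: "constraints w1 w2" for w1 w2
  proof -
    have tau_i: "(\<Sum>z\<in>UNIV. w1 z * Y i 1 z + w2 z * Y i 2 z) = d i" if "i < N" for i
      unfolding d_def by (rule alg[OF c]) (use vY1[OF that] vY2[OF that] vY3[OF that] in metis)+
    have "var N Nz (lin_est N Nz Y w1 w2) =
       (\<Sum>z\<in>UNIV. ((\<Sum>i<N. (w1 z * Y i 1 z + w2 z * Y i 2 z)^2) - (\<Sum>i<N. w1 z * Y i 1 z + w2 z * Y i 2 z)^2 / real N) / ((real N - 1) * real (Nz z)))
        - ((\<Sum>i<N. (\<Sum>z\<in>UNIV. w1 z * Y i 1 z + w2 z * Y i 2 z)^2) - (\<Sum>i<N. \<Sum>z\<in>UNIV. w1 z * Y i 1 z + w2 z * Y i 2 z)^2 / real N) / (real N * (real N - 1))"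
      unfolding lin_eq by (rule var_form(2)[OF N2 pos Mpos])
    also have "\<dots> = (\<Sum>z\<in>UNIV. ((\<Sum>i<N. (w1 z * Y i 1 z + w2 z * Y i 2 z)^2) - (\<Sum>i<N. w1 z * Y i 1 z + w2 z * Y i 2 z)^2 / real N) / ((real N - 1) * real (Nz z))) - K0"
      unfolding K0_def using tau_i by simp
    also have "(\<Sum>z\<in>UNIV. ((\<Sum>i<N. (w1 z * Y i 1 z + w2 z * Y i 2 z)^2) - (\<Sum>i<N. w1 z * Y i 1 z + w2 z * Y i 2 z)^2 / real N) / ((real N - 1) * real (Nz z)))
       = fobj N Nz Y w1 w2"
      unfolding fobj_eq
    proof (rule sum.cong[OF refl])
      fix z
      show "((\<Sum>i<N. (w1 z * Y i 1 z + w2 z * Y i 2 z)^2) - (\<Sum>i<N. w1 z * Y i 1 z + w2 z * Y i 2 z)^2 / real N) / ((real N - 1) * real (Nz z))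
        = (w1 z^2 * S2 N Y 1 z + w2 z^2 * S2 N Y 2 z + 2 * w1 z * w2 z * S12 N Y z) / real (Nz z)"
        unfolding quad divs S2_eq[OF N0] S12_eq[OF N0] by (simp add: algebra_simps)
    qed
    finally show ?thesis .
  qed
  show ?thesis
  proof (intro allI)
    fix w1 w2
    show "BLUE N Nz Y w1 w2 \<longleftrightarrow>
           (constraints w1 w2 \<and> (\<forall>v1 v2. constraints v1 v2 \<longrightarrow> fobj N Nz Y w1 w2 \<le> fobj N Nz Y v1 v2))"
      unfolding BLUE_def unb_iff using Vw by auto
  qed
qed
end
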